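(* Let $N:\mathbb R_+\to\mathbb R_+$ be measurable and let $\mathbf P\subset\mathbb P_{[0,1]}$ be a finite convex collection of bitiles. Then $$\mathbf P=\bigcup_{n\ge0}\mathbf P_n\ \cup\ \mathbf P_{null}$$ (disjoint union) such that for each $n\ge0$: $\operatorname{mass}(\mathbf P_n)\le 2^{-n}$; $\mathbf P_n$ is a convex forest whose trees $T\in\mathcal F_n$ satisfy $\sum_{T\in\mathcal F_n}|I_T|\lesssim 2^n$ (absolute implicit constant); and $C_Pf\equiv0$ for each $P\in\mathbf P_{null}$ and each $f$.
   Context: Notation. $\mathbb R_+=[0,\infty)$. $\mathcal D_+$ denotes the set of dyadic intervals $[2^jm,2^j(m+1))$ with $j\in\mathbb Z$, $m\in\mathbb Z_{\ge 0}$. The Walsh functions are $w_0=1_{[0,1)}$, $w_{2n}(x)=w_n(2x)+w_n(2x-1)$, $w_{2n+1}(x)=w_n(2x)-w_n(2x-1)$ ($n\ge 0$). A tile is a rectangle $p=I_p\times\omega_p\subset\mathbb R_+^2$ with $I_p,\omega_p\in\mathcal D_+$ and $|I_p||\omega_p|=1$; if $p=[2^jm,2^j(m+1))\times[2^{-j}n,2^{-j}(n+1))$ its Walsh wave packet is $W_p(x)=2^{-j/2}w_n(2^{-j}x-m)$. A bitile is $P=I_P\times\omega_P$ with $I_P,\omega_P\in\mathcal D_+$ and $|I_P||\omega_P|=2$; $\omega_{P_l},\omega_{P_u}$ are the left and right halves of $\omega_P$, and $P_l=I_P\times\omega_{P_l}$, $P_u=I_P\times\omega_{P_u}$ are tiles.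 $\mathbb P_{all}$ is the set of all bitiles, and $\mathbb P_{[0,1]}=\{P\in\mathbb P_{all}:I_P\subset[0,1]\}$. For bitiles, $P\le P'$ means $I_P\subset I_{P'}$ and $\omega_{P'}\subset\omega_P$. A collection $\mathbf P$ of bitiles is convex if $P,P''\in\mathbf P$, $P'\in\mathbb P_{all}$ and $P\le P'\le P''$ imply $P'\in\mathbf P$. A tree $T$ with top data $(I_T,\xi_T)$, where $I_T\in\mathcal D_+$ and $\xi_T\in\mathbb R_+$ is not a dyadic rational, is a collection of bitiles with $I_P\subset I_T$ and $\xi_T\in\omega_P$ for all $P\in T$. A forest is a finite collection of bitiles which is a disjoint union of convex trees $T\in\mathcal F$ (the trees together with their top data are part of the data of the forest); it is a convex forest if moreover the whole collection is convex. Model operator: $C_{\mathbf P}f(x)=\sum_{P\in\mathbf P}\langle f,W_{P_u}\rangle W_{P_u}(x)1_{\omega_{P_l}}(N(x))$ (and $C_P=C_{\{P\}}$). Mass (relative to $N$): $E(P)=I_P\cap N^{-1}(\omega_P)$ and $\operatorname{mass}(\mathbf P)=\sup_{P\in\mathbf P}|E(P)|/|I_P|$. *)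

theory Defs
  imports "HOL-Analysis.Analysis"
begin

definition dint :: "int \<Rightarrow> nat \<Rightarrow> real set" where
  "dint j m = {2 powr (real_of_int j) * real m ..< 2 powr (real_of_int j) * (real m + 1)}"

definition dyadic_intervals :: "real set set" where
  "dyadic_intervals = {dint j m | j m. True}"

definition dyadic_rational :: "real \<Rightarrow> bool" where
  "dyadic_rational x \<longleftrightarrow> (\<exists>k::int. \<exists>j::nat. x = real_of_int k / 2 ^ j)"

function walsh :: "nat \<Rightarrow> real \<Rightarrow> real" where
  "walsh n x =
     (if n = 0 then indicator {0..<1} x
      else if even n then walsh (n div 2) (2 * x) + walsh (n div 2) (2 * x - 1)
      else walsh (n div 2) (2 * x) - walsh (n div 2) (2 * x - 1))"
  by auto
termination by (relation "Wellfounded.measure fst") auto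

text \<open>Tiles: (j, m, n) encodes p = [2^j m, 2^j(m+1)) x [2^{-j} n, 2^{-j}(n+1)).
  Every tile arises this way, uniquely.\<close>
type_synonym tile = "int \<times> nat \<times> nat"

definition tile_I :: "tile \<Rightarrow> real set" where
  "tile_I p = (case p of (j, m, n) \<Rightarrow> dint j m)"

definition tile_\<omega> :: "tile \<Rightarrow> real set" where
  "tile_\<omega> p = (case p of (j, m, n) \<Rightarrow> dint (- j) n)"

definition wave :: "tile \<Rightarrow> real \<Rightarrow> real" where
  "wave p x = (case p of (j, m, n) \<Rightarrow>
      2 powr (- real_of_int j / 2) * walsh n (2 powr (- real_of_int j) * x - real m))"

text \<open>Bitiles: (j, m, n) encodes P = [2^j m, 2^j(m+1)) x [2^{1-j} n, 2^{1-j}(n+1)).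
  Every bitile (|I_P||omega_P| = 2, both dyadic) arises this way, uniquely,
  so the set P_all of all bitiles is UNIV :: bitile set.\<close>
type_synonym bitile = "int \<times> nat \<times> nat"

definition bI :: "bitile \<Rightarrow> real set" where
  "bI P = (case P of (j, m, n) \<Rightarrow> dint j m)"

definition b\<omega> :: "bitile \<Rightarrow> real set" where
  "b\<omega> P = (case P of (j, m, n) \<Rightarrow> dint (1 - j) n)"

text \<open>Lower (left half of omega_P) and upper (right half) tiles.\<close>
definition Pl :: "bitile \<Rightarrow> tile" where
  "Pl P = (case P of (j, m, n) \<Rightarrow> (j, m, 2 * n))"

definition Pu :: "bitile \<Rightarrow> tile" where
  "Pu P = (case P of (j, m, n) \<Rightarrow> (j, m, 2 * n + 1))"

definition P_unit :: "bitile set" where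
  "P_unit = {P. bI P \<subseteq> {0..1}}"

definition bitile_le :: "bitile \<Rightarrow> bitile \<Rightarrow> bool" where
  "bitile_le P P' \<longleftrightarrow> bI P \<subseteq> bI P' \<and> b\<omega> P' \<subseteq> b\<omega> P"

definition convex_coll :: "bitile set \<Rightarrow> bool" where
  "convex_coll Ps \<longleftrightarrow> (\<forall>P\<in>Ps. \<forall>P''\<in>Ps. \<forall>P'. bitile_le P P' \<and> bitile_le P' P'' \<longrightarrow> P' \<in> Ps)"

definition is_tree :: "real set \<Rightarrow> real \<Rightarrow> bitile set \<Rightarrow> bool" where
  "is_tree IT \<xi> T \<longleftrightarrow> IT \<in> dyadic_intervals \<and> \<xi> \<ge> 0 \<and> \<not> dyadic_rational \<xi> \<and>
     (\<forall>P\<in>T. bI P \<subseteq> IT \<and> \<xi> \<in> b\<omega> P)"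

definition is_forest :: "bitile set \<Rightarrow> (real set \<times> real \<times> bitile set) set \<Rightarrow> bool" where
  "is_forest Ps F \<longleftrightarrow> finite Ps \<and> finite F \<and>
     (\<forall>(IT, \<xi>, T)\<in>F. is_tree IT \<xi> T \<and> convex_coll T) \<and>
     (\<forall>t1\<in>F. \<forall>t2\<in>F. t1 \<noteq> t2 \<longrightarrow> snd (snd t1) \<inter> snd (snd t2) = {}) \<and>
     Ps = (\<Union>t\<in>F. snd (snd t))"

definition is_convex_forest :: "bitile set \<Rightarrow> (real set \<times> real \<times> bitile set) set \<Rightarrow> bool" where
  "is_convex_forest Ps F \<longleftrightarrow> is_forest Ps F \<and> convex_coll Ps"

definition inner_prod :: "(real \<Rightarrow> complex) \<Rightarrow> (real \<Rightarrow> real) \<Rightarrow> complex" where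
  "inner_prod f g = (LINT x|lborel. f x * complex_of_real (g x))"

definition model_op :: "(real \<Rightarrow> real) \<Rightarrow> bitile set \<Rightarrow> (real \<Rightarrow> complex) \<Rightarrow> real \<Rightarrow> complex" where
  "model_op N Ps f x = (\<Sum>P\<in>Ps. inner_prod f (wave (Pu P)) * complex_of_real (wave (Pu P) x)
        * complex_of_real (indicator (tile_\<omega> (Pl P)) (N x)))"

definition E :: "(real \<Rightarrow> real) \<Rightarrow> bitile \<Rightarrow> real set" where
  "E N P = bI P \<inter> N -` b\<omega> P"

definition mass :: "(real \<Rightarrow> real) \<Rightarrow> bitile set \<Rightarrow> real" where
  "mass N Ps = (if Ps = {} then 0
     else (SUP P\<in>Ps. measure lebesgue (E N P) / measure lborel (bI P)))"

end

theory Submission imports Defs begin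

lemma pow2_pos: "(0::real) < 2 powr x" by simp

lemma dint_mem: "2 powr real_of_int j * real m \<in> dint j m"
  by (simp add: dint_def)

lemma dint_nonempty: "dint j m \<noteq> {}" using dint_mem by blast

lemma measure_dint: "measure lborel (dint j m) = 2 powr real_of_int j"
  by (simp add: dint_def algebra_simps)

lemma dint_ge0: "x \<in> dint j m \<Longrightarrow> 0 \<le> x"
  by (auto simp: dint_def intro: order_trans[rotated])

lemma dint_sub:
  assumes "dint j m \<subseteq> dint j' m'"
  shows "j \<le> j' \<and> (j = j' \<longrightarrow> m = m')"
proof -
  have "measure lborel (dint j m) \<le> measure lborel (dint j' m')"
    using assms by (intro measure_mono_fmeasurable) (auto simp: dint_def fmeasurable_def)
  hence "j \<le> j'" by (simp add: measure_dint)
  moreover have "j = j' \<longrightarrow> m = m'"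
  proof
    assume e: "j = j'"
    let ?a = "2 powr real_of_int j"
    have a: "?a > 0" by simp
    have "?a * real m \<in> dint j' m'" using assms dint_mem by blast
    hence "?a * real m' \<le> ?a * real m \<and> ?a * real m < ?a * (real m' + 1)"
      using e by (simp add: dint_def)
    hence "real m' \<le> real m \<and> real m < real m' + 1" using a
      by (simp add: mult_le_cancel_left_pos mult_less_cancel_left_pos)
    thus "m = m'" by linarith
  qed
  ultimately show ?thesis by blast
qed

lemma dint_nested:
  assumes x1: "x \<in> dint j m" and x2: "x \<in> dint j' m'" and jj: "j \<le> j'"
  shows "dint j m \<subseteq> dint j' m'"
proof -
  define d where "d = nat (j' - j)"
  define a where "a = 2 powr real_of_int j"
  have a: "a > 0" by (simp add: a_def)
  have b: "2 powr real_of_int j' = a * 2 ^ d"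
    using jj by (simp add: a_def d_def powr_realpow[symmetric] powr_add[symmetric])
  have h1: "a * real m \<le> x" "x < a * (real m + 1)" using x1 by (auto simp: dint_def a_def)
  have h2: "a * (2^d * real m') \<le> x" "x < a * (2^d * (real m' + 1))" using x2 b
    by (auto simp: dint_def mult.assoc)
  have "a * (2^d * real m') < a * (real m + 1)" using h1 h2 by linarith
  hence "2^d * real m' < real m + 1" using a by (simp add: mult_less_cancel_left_pos)
  hence "real (2^d * m') < real (m + 1)" by simp
  hence c1: "2^d * m' \<le> m" by linarith
  have "a * real m < a * (2^d * (real m' + 1))" using h1 h2 by linarith
  hence "real m < 2^d * (real m' + 1)" using a by (simp add: mult_less_cancel_left_pos)
  hence "real m < real (2^d * (m' + 1))" by (simp add: algebra_simps)
  hence c2: "m + 1 \<le> 2^d * (m' + 1)" by linarith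
  have c1': "2^d * real m' \<le> real m"
  proof -
    have "real (2^d * m') \<le> real m" using c1 by (simp only: of_nat_le_iff)
    thus ?thesis by simp
  qed
  have c2': "real m + 1 \<le> 2^d * (real m' + 1)"
  proof -
    have "real (m + 1) \<le> real (2^d * (m' + 1))" using c2 by (simp only: of_nat_le_iff)
    thus ?thesis by (simp add: algebra_simps)
  qed
  show ?thesis
  proof
    fix y assume "y \<in> dint j m"
    hence y: "a * real m \<le> y" "y < a * (real m + 1)" by (auto simp: dint_def a_def)
    have "a * (2^d * real m') \<le> a * real m" using c1' a by (simp add: mult_le_cancel_left_pos)
    moreover have "a * (real m + 1) \<le> a * (2^d * (real m' + 1))" using c2' a by (simp add: mult_le_cancel_left_pos)
    ultimately show "y \<in> dint j' m'" using y b by (auto simp: dint_def mult.assoc)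
  qed
qed

lemma dint_nondyadic: "\<exists>\<xi>\<in>dint j m. \<not> dyadic_rational \<xi>"
proof -
  have "countable (case_prod (\<lambda>(k::int) (i::nat). real_of_int k / 2 ^ i) ` UNIV)" by simp
  moreover have "{x. dyadic_rational x} \<subseteq> case_prod (\<lambda>(k::int) (i::nat). real_of_int k / 2 ^ i) ` UNIV"
    by (auto simp: dyadic_rational_def)
  ultimately have c: "countable {x. dyadic_rational x}" by (rule countable_subset[rotated])
  have "uncountable (dint j m)" unfolding dint_def
    by (subst uncountable_half_open_interval_1) simp
  hence "\<not> dint j m \<subseteq> {x. dyadic_rational x}" using c countable_subset by blast
  thus ?thesis by blast
qed


lemma le_refl: "bitile_le P P" by (simp add: bitile_le_def)
lemma le_trans: "bitile_le P Q \<Longrightarrow> bitile_le Q R \<Longrightarrow> bitile_le P R"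
  by (auto simp: bitile_le_def)

lemma le_fst: "bitile_le P Q \<Longrightarrow> fst P \<le> fst Q"
  by (cases P; cases Q) (auto simp: bitile_le_def bI_def dest: dint_sub)

lemma le_eq: assumes "bitile_le P Q" "fst Q \<le> fst P" shows "P = Q"
proof -
  obtain j m n where P: "P = (j,m,n)" by (cases P)
  obtain j' m' n' where Q: "Q = (j',m',n')" by (cases Q)
  have j: "j = j'" using le_fst[OF assms(1)] assms(2) P Q by simp
  have "dint j m \<subseteq> dint j' m'" "dint (1 - j') n' \<subseteq> dint (1 - j) n"
    using assms(1) P Q by (auto simp: bitile_le_def bI_def b\<omega>_def)
  hence "m = m'" "n' = n" using j by (auto dest: dint_sub)
  thus ?thesis using P Q j by simp
qed

lemma E_disj:
  assumes "\<not> bitile_le P Q" "\<not> bitile_le Q P"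
  shows "E N P \<inter> E N Q = {}"
proof (rule ccontr)
  assume "E N P \<inter> E N Q \<noteq> {}"
  then obtain x where x: "x \<in> E N P" "x \<in> E N Q" by blast
  obtain j m n where P: "P = (j,m,n)" by (cases P)
  obtain j' m' n' where Q: "Q = (j',m',n')" by (cases Q)
  have h: "x \<in> dint j m" "x \<in> dint j' m'" "N x \<in> dint (1-j) n" "N x \<in> dint (1-j') n'"
    using x P Q by (auto simp: E_def bI_def b\<omega>_def)
  show False
  proof (cases "j \<le> j'")
    case True
    have "dint j m \<subseteq> dint j' m'" using dint_nested[OF h(1,2) True] .
    moreover have "dint (1-j') n' \<subseteq> dint (1-j) n" using dint_nested[OF h(4,3)] True by simp
    ultimately have "bitile_le P Q" using P Q by (simp add: bitile_le_def bI_def b\<omega>_def)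
    thus False using assms by blast
  next
    case False
    have "dint j' m' \<subseteq> dint j m" using dint_nested[OF h(2,1)] False by simp
    moreover have "dint (1-j) n \<subseteq> dint (1-j') n'" using dint_nested[OF h(3,4)] False by simp
    ultimately have "bitile_le Q P" using P Q by (simp add: bitile_le_def bI_def b\<omega>_def)
    thus False using assms by blast
  qed
qed

lemma forest_exists:
  assumes fin: "finite Q" and cv: "convex_coll Q" and finT: "finite Tops"
    and cov: "\<forall>P\<in>Q. \<exists>t\<in>Tops. bitile_le P t"
  shows "\<exists>F. is_convex_forest Q F \<and>
     (\<Sum>(IT, \<xi>, T)\<in>F. measure lborel IT) \<le> (\<Sum>t\<in>Tops. measure lborel (bI t))"
proof -
  define cand where "cand P = {t\<in>Tops. bitile_le P t}" for P
  define g where "g P = (SOME t. t \<in> cand P \<and> (\<forall>u\<in>cand P. to_nat t \<le> to_nat u))" for P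
  have g: "g P \<in> cand P \<and> (\<forall>u\<in>cand P. to_nat (g P) \<le> to_nat u)" if "P \<in> Q" for P
  proof -
    have ne: "cand P \<noteq> {}" using cov that unfolding cand_def by blast
    have fc: "finite (cand P)" using finT by (simp add: cand_def)
    have "Min (to_nat ` cand P) \<in> to_nat ` cand P" using ne fc by (intro Min_in) auto
    then obtain t where t: "t \<in> cand P" "to_nat t = Min (to_nat ` cand P)" by auto
    have "\<forall>u\<in>cand P. to_nat t \<le> to_nat u" using t fc by auto
    hence "\<exists>t. t \<in> cand P \<and> (\<forall>u\<in>cand P. to_nat t \<le> to_nat u)" using t by blast
    thus ?thesis unfolding g_def by (rule someI_ex)
  qed
  define xi where "xi t = (SOME \<xi>. \<xi> \<in> b\<omega> t \<and> \<not> dyadic_rational \<xi>)" for t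
  have xi: "xi t \<in> b\<omega> t \<and> \<not> dyadic_rational (xi t)" for t
  proof -
    obtain j m n where t: "t = (j,m,n)" by (cases t)
    have "\<exists>\<xi>. \<xi> \<in> b\<omega> t \<and> \<not> dyadic_rational \<xi>" using dint_nondyadic[of "1-j" n] t
      by (auto simp: b\<omega>_def)
    thus ?thesis unfolding xi_def by (rule someI_ex)
  qed
  define tr where "tr t = {P\<in>Q. g P = t}" for t
  define F where "F = (\<lambda>t. (bI t, xi t, tr t)) ` Tops"
  have tree: "is_tree (bI t) (xi t) (tr t)" for t
  proof -
    obtain j m n where t: "t = (j,m,n)" by (cases t)
    have "bI t \<in> dyadic_intervals" using t by (auto simp: bI_def dyadic_intervals_def)
    moreover have "xi t \<ge> 0" using xi[of t] t by (auto simp: b\<omega>_def dint_ge0)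
    moreover have "bI P \<subseteq> bI t \<and> xi t \<in> b\<omega> P" if "P \<in> tr t" for P
    proof -
      have "bitile_le P t" using g[of P] that by (auto simp: tr_def cand_def)
      thus ?thesis using xi[of t] by (auto simp: bitile_le_def)
    qed
    ultimately show ?thesis using xi[of t] by (auto simp: is_tree_def)
  qed
  have conv: "convex_coll (tr t)" for t
    unfolding convex_coll_def
  proof (intro ballI allI impI)
    fix P R Q' assume P: "P \<in> tr t" and R: "R \<in> tr t" and le: "bitile_le P Q' \<and> bitile_le Q' R"
    have PQ: "P \<in> Q" "R \<in> Q" using P R by (auto simp: tr_def)
    have Q': "Q' \<in> Q" using cv PQ le unfolding convex_coll_def by blast
    have c1: "cand R \<subseteq> cand Q'" using le by (auto simp: cand_def intro: le_trans)
    have c2: "cand Q' \<subseteq> cand P" using le by (auto simp: cand_def intro: le_trans)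
    have gR: "g R = t" "g P = t" using P R by (auto simp: tr_def)
    have "to_nat (g Q') \<le> to_nat t" using g[OF Q'] g[OF PQ(2)] c1 gR by auto
    moreover have "to_nat t \<le> to_nat (g Q')" using g[OF Q'] g[OF PQ(1)] c2 gR by auto
    ultimately have "g Q' = t" by simp
    thus "Q' \<in> tr t" using Q' by (simp add: tr_def)
  qed
  have forest: "is_forest Q F"
    unfolding is_forest_def
  proof (intro conjI)
    show "finite Q" "finite F" using fin finT by (auto simp: F_def)
    show "\<forall>(IT, \<xi>, T)\<in>F. is_tree IT \<xi> T \<and> convex_coll T"
      using tree conv by (auto simp: F_def)
    show "\<forall>t1\<in>F. \<forall>t2\<in>F. t1 \<noteq> t2 \<longrightarrow> snd (snd t1) \<inter> snd (snd t2) = {}"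
      by (auto simp: F_def tr_def)
    show "Q = (\<Union>t\<in>F. snd (snd t))"
    proof
      show "Q \<subseteq> (\<Union>t\<in>F. snd (snd t))"
      proof
        fix P assume P: "P \<in> Q"
        have "g P \<in> Tops" using g[OF P] by (simp add: cand_def)
        moreover have "P \<in> tr (g P)" using P by (simp add: tr_def)
        ultimately show "P \<in> (\<Union>t\<in>F. snd (snd t))" by (auto simp: F_def)
      qed
      show "(\<Union>t\<in>F. snd (snd t)) \<subseteq> Q" by (auto simp: F_def tr_def)
    qed
  qed
  have "(\<Sum>(IT, \<xi>, T)\<in>F. measure lborel IT) \<le>
        (\<Sum>t\<in>Tops. (\<lambda>(IT, \<xi>, T). measure lborel IT) ((\<lambda>t. (bI t, xi t, tr t)) t))"
    unfolding F_def using sum_image_le[OF finT, of "\<lambda>(IT, \<xi>, T). measure lborel IT" "\<lambda>t. (bI t, xi t, tr t)"]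
    by (simp add: o_def)
  hence "(\<Sum>(IT, \<xi>, T)\<in>F. measure lborel IT) \<le> (\<Sum>t\<in>Tops. measure lborel (bI t))" by simp
  thus ?thesis using forest cv by (auto simp: is_convex_forest_def)
qed


lemma half_pow: "(2::real) powr (- real n) = (1/2)^n"
  by (simp add: powr_minus powr_realpow power_one_over inverse_eq_divide)

theorem proposition5p2:
  "\<exists>C::real. \<forall>(N :: real \<Rightarrow> real) (Ps :: bitile set).
     N \<in> borel_measurable (restrict_space lebesgue {0..}) \<and> (\<forall>x\<ge>0. N x \<ge> 0) \<and>
     finite Ps \<and> Ps \<subseteq> P_unit \<and> convex_coll Ps \<longrightarrow>
     (\<exists>(Pn :: nat \<Rightarrow> bitile set) (Pnull :: bitile set)
        (F :: nat \<Rightarrow> (real set \<times> real \<times> bitile set) set).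
        Ps = (\<Union>n. Pn n) \<union> Pnull \<and>
        (\<forall>n m. n \<noteq> m \<longrightarrow> Pn n \<inter> Pn m = {}) \<and>
        (\<forall>n. Pn n \<inter> Pnull = {}) \<and>
        (\<forall>n. mass N (Pn n) \<le> 2 powr (- real n) \<and>
             is_convex_forest (Pn n) (F n) \<and>
             (\<Sum>(IT, \<xi>, T)\<in>F n. measure lborel IT) \<le> C * 2 ^ n) \<and>
        (\<forall>P\<in>Pnull. \<forall>f x. model_op N {P} f x = 0))"
proof (rule exI[of _ 2], intro allI impI)
  fix N :: "real \<Rightarrow> real" and Ps :: "bitile set"
  assume "N \<in> borel_measurable (restrict_space lebesgue {0..}) \<and> (\<forall>x\<ge>0. N x \<ge> 0) \<and>
     finite Ps \<and> Ps \<subseteq> P_unit \<and> convex_coll Ps"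
  hence fin: "finite Ps" and unit: "Ps \<subseteq> P_unit" and cv: "convex_coll Ps" by auto
  have unitI: "bI P \<subseteq> {0..1}" if "P \<in> Ps" for P using unit that by (auto simp: P_unit_def)
  have bIpos: "measure lborel (bI P) > 0" for P
    by (cases P) (simp add: bI_def measure_dint)
  have bIsets: "bI P \<in> sets lborel" for P
    by (cases P) (simp add: bI_def dint_def)
  have U01: "{0..1::real} \<in> fmeasurable lebesgue" by simp
  have Efm: "E N P \<in> fmeasurable lebesgue" if "P \<in> Ps" "E N P \<in> sets lebesgue" for P
    by (rule fmeasurableI2[OF U01 _ that(2)]) (use unitI[OF that(1)] in \<open>auto simp: E_def\<close>)
  define d where "d P = measure lebesgue (E N P) / measure lborel (bI P)" for P
  have d0: "0 \<le> d P" for P using bIpos[of P] by (simp add: d_def)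
  have d1: "d P \<le> 1" if P: "P \<in> Ps" for P
  proof (cases "E N P \<in> sets lebesgue")
    case True
    have "bI P \<in> fmeasurable lebesgue"
      by (rule fmeasurableI2[OF U01 unitI[OF P]]) (use bIsets[of P] in simp)
    hence "measure lebesgue (E N P) \<le> measure lebesgue (bI P)"
      using True by (intro measure_mono_fmeasurable) (auto simp: E_def)
    also have "\<dots> = measure lborel (bI P)" using bIsets[of P] by simp
    finally show ?thesis using bIpos[of P] by (simp add: d_def)
  next
    case False thus ?thesis by (simp add: d_def measure_notin_sets)
  qed
  define up where "up P = {Q\<in>Ps. bitile_le P Q}" for P
  define M where "M P = Max (d ` up P)" for P
  have upfin: "finite (up P)" for P using fin by (simp add: up_def)
  have upin: "P \<in> up P" if "P \<in> Ps" for P using that by (simp add: up_def le_refl)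
  have Mge: "d P \<le> M P" if "P \<in> Ps" for P
    unfolding M_def using upfin upin[OF that] by (intro Max_ge) auto
  have Matt: "\<exists>Q\<in>up P. M P = d Q" if "P \<in> Ps" for P
  proof -
    have "M P \<in> d ` up P" unfolding M_def using upfin upin[OF that] by (intro Max_in) auto
    thus ?thesis by auto
  qed
  have M0: "0 \<le> M P" if "P \<in> Ps" for P using Mge[OF that] d0[of P] by linarith
  have M1: "M P \<le> 1" if "P \<in> Ps" for P
    using Matt[OF that] d1 by (auto simp: up_def)
  have Mmono: "M Q \<le> M P" if "P \<in> Ps" "Q \<in> Ps" "bitile_le P Q" for P Q
  proof -
    have "up Q \<subseteq> up P" using that by (auto simp: up_def intro: le_trans)
    thus ?thesis unfolding M_def using upfin upin[OF that(2)] by (intro Max_mono) auto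
  qed
  define lev0 where "lev0 P = (LEAST n. (1/2::real)^(Suc n) < M P)" for P
  have lev0a: "(1/2::real)^(Suc (lev0 P)) < M P" if MP: "M P > 0" for P
  proof -
    obtain n where "(1/2::real)^n < M P" using real_arch_pow_inv[OF MP, of "1/2"] by auto
    moreover have "(1/2::real)^(Suc n) \<le> (1/2)^n" by simp
    ultimately have "\<exists>n. (1/2::real)^(Suc n) < M P" by (meson le_less_trans)
    thus ?thesis unfolding lev0_def by (rule LeastI_ex)
  qed
  have lev0b: "M P \<le> (1/2::real)^(lev0 P)" if "P \<in> Ps" for P
  proof (cases "lev0 P")
    case 0 thus ?thesis using M1[OF that] by simp
  next
    case (Suc k)
    have "k < lev0 P" using Suc by simp
    hence "\<not> (1/2::real)^(Suc k) < M P" unfolding lev0_def by (rule not_less_Least)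
    thus ?thesis using Suc by simp
  qed
  define S where "S = (\<Sum>P\<in>Ps. measure lborel (bI P))"
  define nZ where "nZ = (\<Sum>P\<in>Ps. lev0 P) + nat \<lceil>S\<rceil> + 1"
  define lev where "lev P = (if M P > 0 then lev0 P else nZ)" for P
  have lev0Z: "lev0 P < nZ" if "P \<in> Ps" for P
    using member_le_sum[OF that, of lev0, simplified, OF fin] by (simp add: nZ_def)
  have levZ: "lev P \<le> nZ" if "P \<in> Ps" for P
    using lev0Z[OF that] by (simp add: lev_def)
  have SZ: "S \<le> 2 ^ nZ"
  proof -
    have "S \<le> real (nat \<lceil>S\<rceil>)" by linarith
    also have "\<dots> \<le> real nZ" by (simp add: nZ_def sum_nonneg)
    also have "\<dots> \<le> 2 ^ nZ"
    proof -
      have "nZ < 2 ^ nZ" by (rule less_exp)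
      hence "real nZ < real (2 ^ nZ)" by (simp only: of_nat_less_iff)
      thus ?thesis by simp
    qed
    finally show ?thesis .
  qed
  have levmono: "lev P \<le> lev Q" if "P \<in> Ps" "Q \<in> Ps" "bitile_le P Q" for P Q
  proof (cases "M Q > 0")
    case True
    hence MP: "M P > 0" using Mmono[OF that] by linarith
    have "(1/2::real)^(Suc (lev0 Q)) < M P" using lev0a[OF True] Mmono[OF that] by linarith
    hence "lev0 P \<le> lev0 Q" unfolding lev0_def by (rule Least_le)
    thus ?thesis using True MP by (simp add: lev_def)
  next
    case False thus ?thesis using levZ[OF that(1)] by (simp add: lev_def)
  qed
  define Pn where "Pn n = {P\<in>Ps. lev P = n}" for n
  have cvn: "convex_coll (Pn n)" for n
    unfolding convex_coll_def
  proof (intro ballI allI impI)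
    fix P R Q assume P: "P \<in> Pn n" and R: "R \<in> Pn n" and le: "bitile_le P Q \<and> bitile_le Q R"
    have Q: "Q \<in> Ps" using cv P R le unfolding convex_coll_def Pn_def by blast
    have PR: "P \<in> Ps" "R \<in> Ps" using P R by (auto simp: Pn_def)
    have "lev P \<le> lev Q" "lev Q \<le> lev R" using levmono[OF PR(1) Q] levmono[OF Q PR(2)] le by auto
    thus "Q \<in> Pn n" using P R Q by (auto simp: Pn_def)
  qed
  have massn: "mass N (Pn n) \<le> 2 powr (- real n)" for n
  proof (cases "Pn n = {}")
    case True thus ?thesis by (simp add: mass_def)
  next
    case False
    have "d P \<le> (1/2)^n" if P: "P \<in> Pn n" for P
    proof (cases "M P > 0")
      case True
      hence "lev0 P = n" using P by (simp add: Pn_def lev_def)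
      thus ?thesis using Mge[of P] lev0b[of P] P by (auto simp: Pn_def)
    next
      case False
      have "d P \<le> 0" using False Mge[of P] P by (auto simp: Pn_def)
      moreover have "(0::real) \<le> (1/2)^n" by simp
      ultimately show ?thesis by linarith
    qed
    hence "(SUP P\<in>Pn n. measure lebesgue (E N P) / measure lborel (bI P)) \<le> (1/2)^n"
      using False by (intro cSUP_least) (auto simp: d_def)
    thus ?thesis using False by (simp add: mass_def half_pow)
  qed
  have forestn: "\<exists>F. is_convex_forest (Pn n) F \<and>
      (\<Sum>(IT, \<xi>, T)\<in>F. measure lborel IT) \<le> 2 * 2 ^ n" for n
  proof (cases "n = nZ")
    case True
    obtain F where F: "is_convex_forest (Pn n) F"
      "(\<Sum>(IT, \<xi>, T)\<in>F. measure lborel IT) \<le> (\<Sum>t\<in>Pn n. measure lborel (bI t))"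
    proof -
      have finPn: "finite (Pn n)" using fin by (simp add: Pn_def)
      have cov: "\<forall>P\<in>Pn n. \<exists>t\<in>Pn n. bitile_le P t" using le_refl by blast
      show ?thesis using forest_exists[OF finPn cvn finPn cov] that by blast
    qed
    have "(\<Sum>t\<in>Pn n. measure lborel (bI t)) \<le> S"
      unfolding S_def using fin by (intro sum_mono2) (auto simp: Pn_def)
    hence "(\<Sum>(IT, \<xi>, T)\<in>F. measure lborel IT) \<le> 2 * 2 ^ n" using F(2) SZ True
    proof -
      have "(0::real) \<le> 2 ^ n" "S \<le> 2 ^ n" using SZ True by simp_all
      thus ?thesis using F(2) SZ True \<open>(\<Sum>t\<in>Pn n. measure lborel (bI t)) \<le> S\<close> by linarith
    qed
    thus ?thesis using F(1) by blast
  next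
    case False
    define A where "A = {P\<in>Pn n. (1/2::real)^(Suc n) < d P}"
    define Tops where "Tops = {t\<in>A. \<forall>u\<in>A. bitile_le t u \<longrightarrow> u = t}"
    have finA: "finite A" using fin by (simp add: A_def Pn_def)
    have finT: "finite Tops" using finA by (simp add: Tops_def)
    have cov: "\<forall>P\<in>Pn n. \<exists>t\<in>Tops. bitile_le P t"
    proof
      fix P assume P: "P \<in> Pn n"
      have Ps: "P \<in> Ps" and lP: "lev P = n" using P by (auto simp: Pn_def)
      have MP: "M P > 0" using lP False by (auto simp: lev_def split: if_splits)
      hence l0: "lev0 P = n" using lP by (simp add: lev_def)
      obtain Q where Q: "Q \<in> up P" "M P = d Q" using Matt[OF Ps] by blast
      have QPs: "Q \<in> Ps" and PQ: "bitile_le P Q" using Q by (auto simp: up_def)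
      have dQ: "(1/2::real)^(Suc n) < d Q" using lev0a[OF MP] l0 Q by simp
      have "(0::real) < (1/2)^(Suc n)" by simp
      hence MQ: "M Q > 0" using dQ Mge[OF QPs] by linarith
      have "(1/2::real)^(Suc n) < M Q" using dQ Mge[OF QPs] by linarith
      hence "lev0 Q \<le> n" unfolding lev0_def by (rule Least_le)
      moreover have "n \<le> lev Q" using levmono[OF Ps QPs PQ] lP by simp
      ultimately have "lev Q = n" using MQ by (simp add: lev_def)
      hence QA: "Q \<in> A" using QPs dQ by (simp add: A_def Pn_def)
      define U where "U = {u\<in>A. bitile_le Q u}"
      have finU: "finite U" using finA by (simp add: U_def)
      have QU: "Q \<in> U" using QA by (simp add: U_def le_refl)
      have "Max (fst ` U) \<in> fst ` U" using finU QU by (intro Max_in) auto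
      then obtain u where u: "u \<in> U" "fst u = Max (fst ` U)" by auto
      have uT: "u \<in> Tops"
        unfolding Tops_def
      proof (intro CollectI conjI ballI impI)
        show "u \<in> A" using u by (simp add: U_def)
        fix v assume v: "v \<in> A" "bitile_le u v"
        have "v \<in> U" using v u by (auto simp: U_def intro: le_trans)
        hence "fst v \<le> fst u" using u finU by simp
        thus "v = u" using le_eq[OF v(2)] by simp
      qed
      have "bitile_le P u" using PQ u by (auto simp: U_def intro: le_trans)
      thus "\<exists>t\<in>Tops. bitile_le P t" using uT by blast
    qed
    obtain F where F: "is_convex_forest (Pn n) F"
      "(\<Sum>(IT, \<xi>, T)\<in>F. measure lborel IT) \<le> (\<Sum>t\<in>Tops. measure lborel (bI t))"
    proof -
      have finPn: "finite (Pn n)" using fin by (simp add: Pn_def)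
      show ?thesis using forest_exists[OF finPn cvn finT cov] that by blast
    qed
    have TPs: "t \<in> Ps" if "t \<in> Tops" for t using that by (auto simp: Tops_def A_def Pn_def)
    have Tsets: "E N t \<in> sets lebesgue" if "t \<in> Tops" for t
    proof (rule ccontr)
      assume "E N t \<notin> sets lebesgue"
      hence "d t = 0" by (simp add: d_def measure_notin_sets)
      moreover have "(1/2::real)^(Suc n) < d t" using that by (auto simp: Tops_def A_def)
      moreover have "(0::real) < (1/2)^(Suc n)" by simp
      ultimately show False by linarith
    qed
    have each: "measure lborel (bI t) \<le> 2^(Suc n) * measure lebesgue (E N t)" if "t \<in> Tops" for t
    proof -
      have "(1/2::real)^(Suc n) < d t" using that by (auto simp: Tops_def A_def)
      hence "measure lborel (bI t) / 2^(Suc n) < measure lebesgue (E N t) / measure lborel (bI t) * measure lborel (bI t)"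
        using bIpos[of t] by (simp add: d_def power_one_over field_simps)
      hence "measure lborel (bI t) / 2^(Suc n) < measure lebesgue (E N t)"
        using bIpos[of t] by simp
      thus ?thesis by (simp add: field_simps)
    qed
    have disj: "disjoint_family_on (E N) Tops"
      unfolding disjoint_family_on_def
    proof (intro ballI impI)
      fix t1 t2 assume t: "t1 \<in> Tops" "t2 \<in> Tops" "t1 \<noteq> t2"
      have "\<not> bitile_le t1 t2" using t by (auto simp: Tops_def)
      moreover have "\<not> bitile_le t2 t1" using t by (auto simp: Tops_def)
      ultimately show "E N t1 \<inter> E N t2 = {}" by (rule E_disj)
    qed
    have "(\<Sum>t\<in>Tops. measure lborel (bI t)) \<le> (\<Sum>t\<in>Tops. 2^(Suc n) * measure lebesgue (E N t))"
      using each by (rule sum_mono)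
    also have "\<dots> = 2^(Suc n) * (\<Sum>t\<in>Tops. measure lebesgue (E N t))"
      by (simp add: sum_distrib_left)
    also have "(\<Sum>t\<in>Tops. measure lebesgue (E N t)) = measure lebesgue (\<Union>t\<in>Tops. E N t)"
    proof (rule measure_finite_Union[symmetric, OF finT _ disj])
      show "E N ` Tops \<subseteq> sets lebesgue" using Tsets by auto
      fix t assume "t \<in> Tops"
      thus "emeasure lebesgue (E N t) \<noteq> \<infinity>" using fmeasurableD2[OF Efm[OF TPs Tsets]] by simp
    qed
    also have "measure lebesgue (\<Union>t\<in>Tops. E N t) \<le> measure lebesgue {0..1::real}"
    proof (rule measure_mono_fmeasurable[OF _ _ U01])
      show "(\<Union>t\<in>Tops. E N t) \<subseteq> {0..1}"
      proof
        fix x assume "x \<in> (\<Union>t\<in>Tops. E N t)"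
        then obtain t where "t \<in> Tops" "x \<in> E N t" by blast
        thus "x \<in> {0..1}" using unitI[OF TPs[of t]] by (auto simp: E_def)
      qed
      show "(\<Union>t\<in>Tops. E N t) \<in> sets lebesgue" using finT Tsets by auto
    qed
    also have "measure lebesgue {0..1::real} = 1" by simp
    finally have "(\<Sum>t\<in>Tops. measure lborel (bI t)) \<le> 2 * 2 ^ n" by simp
    thus ?thesis using F by auto
  qed
  obtain F where F: "\<forall>n. is_convex_forest (Pn n) (F n) \<and>
      (\<Sum>(IT, \<xi>, T)\<in>F n. measure lborel IT) \<le> 2 * 2 ^ n"
    using forestn by metis
  show "\<exists>(Pn :: nat \<Rightarrow> bitile set) (Pnull :: bitile set)
        (F :: nat \<Rightarrow> (real set \<times> real \<times> bitile set) set).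
        Ps = (\<Union>n. Pn n) \<union> Pnull \<and>
        (\<forall>n m. n \<noteq> m \<longrightarrow> Pn n \<inter> Pn m = {}) \<and>
        (\<forall>n. Pn n \<inter> Pnull = {}) \<and>
        (\<forall>n. mass N (Pn n) \<le> 2 powr (- real n) \<and>
             is_convex_forest (Pn n) (F n) \<and>
             (\<Sum>(IT, \<xi>, T)\<in>F n. measure lborel IT) \<le> 2 * 2 ^ n) \<and>
        (\<forall>P\<in>Pnull. \<forall>f x. model_op N {P} f x = 0)"
  proof (intro exI conjI)
    show "Ps = (\<Union>n. Pn n) \<union> {}" by (auto simp: Pn_def)
    show "\<forall>n m. n \<noteq> m \<longrightarrow> Pn n \<inter> Pn m = {}" by (auto simp: Pn_def)
    show "\<forall>n. Pn n \<inter> {} = {}" by simp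
    show "\<forall>n. mass N (Pn n) \<le> 2 powr (- real n) \<and> is_convex_forest (Pn n) (F n) \<and>
             (\<Sum>(IT, \<xi>, T)\<in>F n. measure lborel IT) \<le> 2 * 2 ^ n" using F massn by blast
    show "\<forall>P\<in>{}. \<forall>f x. model_op N {P} f x = 0" by simp
  qed
qed

end
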